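(* Let $n\ge 1$ and $m\ge 2$ be integers with $m\nmid n$, and let $\ell=\lfloor n/m\rfloor$. Then the algebraic degree of $\theta_{m,k}$ is $(m-1)k+1$ for every $1\le k\le \ell$. In particular, the maps $\theta_{m,0},\theta_{m,1},\dots,\theta_{m,\ell}$ are linearly independent over $\mathbb{F}_2$ (as elements of the $\mathbb{F}_2$-vector space of all maps $\mathbb{F}_2^n\to\mathbb{F}_2^n$ under pointwise addition), and hence $\Theta_{n,m}=\{\sum_{k=0}^{\ell}a_k\theta_{m,k}: a_k\in\mathbb{F}_2\}$ is an $\mathbb{F}_2$-vector space of dimension $\ell+1$.
   Context: For $x=(x_0,\dots,x_{n-1})\in\mathbb{F}_2^n$, indices of coordinates are taken modulo $n$. For a nonnegative integer $k$, the map $\theta_{m,k}\colon\mathbb{F}_2^n\to\mathbb{F}_2^n$ is defined by $\theta_{m,k}(x)=y$ with $y_i=x_{i+mk}\prod_{1\le j\le mk-1,\ m\nmid j}(x_{i+j}+1)$ for $i\in\{0,\dots,n-1\}$ (for $k=0$ the empty product is $1$, so $\theta_{m,0}$ is the identity map). The algebraic degree of a map $\mathbb{F}_2^n\to\mathbb{F}_2^n$ is the maximum of the degrees of the algebraic normal forms of its coordinate functions. *)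

theory Defs
  imports Main "HOL-Library.Z2"
begin

text \<open>Vectors of F_2^n are modelled as functions nat => bit that vanish
  outside the index range {0..<n}; coordinate indices are taken mod n.\<close>

definition vecs :: "nat \<Rightarrow> (nat \<Rightarrow> bit) set" where
  "vecs n = {x. \<forall>i. n \<le> i \<longrightarrow> x i = 0}"

definition theta :: "nat \<Rightarrow> nat \<Rightarrow> nat \<Rightarrow> (nat \<Rightarrow> bit) \<Rightarrow> (nat \<Rightarrow> bit)" where
  "theta n m k x = (\<lambda>i. if i < n then
      x ((i + m * k) mod n) *
      (\<Prod>j\<in>{j. 1 \<le> j \<and> j \<le> m * k - 1 \<and> \<not> m dvd j}. x ((i + j) mod n) + 1)
    else 0)"

definition anf :: "nat \<Rightarrow> ((nat \<Rightarrow> bit) \<Rightarrow> bit) \<Rightarrow> nat set \<Rightarrow> bit" where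
  "anf n f = (THE a. (\<forall>S. \<not> S \<subseteq> {..<n} \<longrightarrow> a S = 0) \<and>
      (\<forall>x\<in>vecs n. f x = (\<Sum>S\<in>Pow {..<n}. a S * (\<Prod>i\<in>S. x i))))"

definition anf_degree :: "nat \<Rightarrow> ((nat \<Rightarrow> bit) \<Rightarrow> bit) \<Rightarrow> nat" where
  "anf_degree n f = Max ({card S | S. S \<subseteq> {..<n} \<and> anf n f S \<noteq> 0} \<union> {0})"

definition alg_degree :: "nat \<Rightarrow> ((nat \<Rightarrow> bit) \<Rightarrow> (nat \<Rightarrow> bit)) \<Rightarrow> nat" where
  "alg_degree n F = Max ((\<lambda>i. anf_degree n (\<lambda>x. F x i)) ` {..<n})"

definition Theta :: "nat \<Rightarrow> nat \<Rightarrow> ((nat \<Rightarrow> bit) \<Rightarrow> (nat \<Rightarrow> bit)) set" where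
  "Theta n m = {(\<lambda>x i. \<Sum>k\<le>n div m. a k * theta n m k x i) | a. True}"

end

theory Submission
  imports Defs "HOL-Library.FuncSet"
begin

lemma bit_self_add: "(a::bit) + a = 0"
  by (cases a) auto

lemma anf_zero:
  fixes d :: "nat set \<Rightarrow> bit"
  assumes supp: "\<forall>S. \<not> S \<subseteq> {..<n} \<longrightarrow> d S = 0"
    and z: "\<forall>x\<in>vecs n. (\<Sum>S\<in>Pow {..<n}. d S * (\<Prod>i\<in>S. x i)) = 0"
  shows "d = (\<lambda>_. 0)"
proof (rule ccontr)
  assume "d \<noteq> (\<lambda>_. 0)"
  then obtain S1 where "d S1 \<noteq> 0" by (auto simp: fun_eq_iff simp del: bit_not_zero_iff)
  from ex_has_least_nat[of "\<lambda>S. d S \<noteq> 0" S1 card, OF this]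
  obtain S0 where S0: "d S0 \<noteq> 0" and mn: "\<And>T. d T \<noteq> 0 \<Longrightarrow> card S0 \<le> card T" by blast
  have S0n: "S0 \<subseteq> {..<n}" using S0 supp by blast
  have finS0: "finite S0" using S0n finite_subset by blast
  define x where "x = (\<lambda>i. if i \<in> S0 then (1::bit) else 0)"
  have xv: "x \<in> vecs n" using S0n unfolding vecs_def x_def by auto
  have px: "(\<Prod>i\<in>T. x i) = (if T \<subseteq> S0 then 1 else 0)" if "finite T" for T
    using that by (induction T rule: finite_induct) (auto simp: x_def simp del: mult_bit_eq_and)
  have "(\<Sum>S\<in>Pow {..<n}. d S * (\<Prod>i\<in>S. x i)) = d S0 * (\<Prod>i\<in>S0. x i) + (\<Sum>S\<in>Pow {..<n} - {S0}. d S * (\<Prod>i\<in>S. x i))"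
    using S0n by (subst sum.remove[of _ S0]) auto
  also have "(\<Sum>S\<in>Pow {..<n} - {S0}. d S * (\<Prod>i\<in>S. x i)) = 0"
  proof (rule sum.neutral, rule ballI)
    fix T assume T: "T \<in> Pow {..<n} - {S0}"
    then have fT: "finite T" using finite_subset by blast
    show "d T * (\<Prod>i\<in>T. x i) = 0"
    proof (cases "T \<subseteq> S0")
      case True
      then have "T \<subset> S0" using T by auto
      then have "card T < card S0" using finS0 psubset_card_mono by blast
      then have "d T = 0" using mn by force
      then show ?thesis by (simp del: mult_bit_eq_and)
    next
      case False then show ?thesis using px[OF fT] by (simp del: mult_bit_eq_and)
    qed
  qed
  finally have "d S0 = 0" using z xv px[OF finS0] by (simp del: mult_bit_eq_and add_bit_eq_xor)
  then show False using S0 by simp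
qed

lemma anf_eq:
  fixes c :: "nat set \<Rightarrow> bit"
  assumes supp: "\<forall>S. \<not> S \<subseteq> {..<n} \<longrightarrow> c S = 0"
    and e: "\<forall>x\<in>vecs n. f x = (\<Sum>S\<in>Pow {..<n}. c S * (\<Prod>i\<in>S. x i))"
  shows "anf n f = c"
  unfolding anf_def
proof (rule the_equality)
  show "(\<forall>S. \<not> S \<subseteq> {..<n} \<longrightarrow> c S = 0) \<and> (\<forall>x\<in>vecs n. f x = (\<Sum>S\<in>Pow {..<n}. c S * (\<Prod>i\<in>S. x i)))"
    using assms by blast
next
  fix a assume a: "(\<forall>S. \<not> S \<subseteq> {..<n} \<longrightarrow> a S = 0) \<and> (\<forall>x\<in>vecs n. f x = (\<Sum>S\<in>Pow {..<n}. a S * (\<Prod>i\<in>S. x i)))"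
  define d where "d = (\<lambda>S. a S + c S)"
  have "\<forall>S. \<not> S \<subseteq> {..<n} \<longrightarrow> d S = 0" using a supp by (simp add: d_def del: add_bit_eq_xor)
  moreover have "\<forall>x\<in>vecs n. (\<Sum>S\<in>Pow {..<n}. d S * (\<Prod>i\<in>S. x i)) = 0"
  proof
    fix x assume x: "x \<in> vecs n"
    have "(\<Sum>S\<in>Pow {..<n}. d S * (\<Prod>i\<in>S. x i)) = (\<Sum>S\<in>Pow {..<n}. a S * (\<Prod>i\<in>S. x i)) + (\<Sum>S\<in>Pow {..<n}. c S * (\<Prod>i\<in>S. x i))"
      by (simp add: d_def distrib_right sum.distrib del: add_bit_eq_xor mult_bit_eq_and)
    also have "\<dots> = f x + f x" using a e x by simp
    finally show "(\<Sum>S\<in>Pow {..<n}. d S * (\<Prod>i\<in>S. x i)) = 0" using bit_self_add by simp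
  qed
  ultimately have "d = (\<lambda>_. 0)" by (rule anf_zero)
  then show "a = c" unfolding d_def fun_eq_iff
    by (metis add_diff_cancel_left' diff_zero minus_bit_def)
qed


definition Jset :: "nat \<Rightarrow> nat \<Rightarrow> nat set" where
  "Jset m k = {j. 1 \<le> j \<and> j \<le> m * k - 1 \<and> \<not> m dvd j}"

lemma mod_inj_aux:
  fixes i j1 j2 n :: nat
  assumes "j1 < n" "j2 < n" "(i + j1) mod n = (i + j2) mod n"
  shows "j1 = j2"
proof -
  have "j1 mod n = j2 mod n" using assms(3) by (simp add: nat_mod_eq_iff)
  then show ?thesis using assms by simp
qed

lemma Jset_bound: "j \<in> Jset m k \<Longrightarrow> 1 \<le> j \<and> j < m * k"
  unfolding Jset_def by auto

lemma Jset_fin: "finite (Jset m k)"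
  unfolding Jset_def by (rule finite_subset[of _ "{..m*k}"]) auto

lemma theta_form:
  fixes n m k i :: nat
  defines "p \<equiv> (i + m * k) mod n"
  defines "Q \<equiv> (\<lambda>j. (i + j) mod n) ` Jset m k"
  assumes mk: "m * k < n" and i: "i < n"
  shows "p \<notin> Q" and "p < n" and "Q \<subseteq> {..<n}" and "card Q = card (Jset m k)"
    and "theta n m k x i = x p * (\<Prod>q\<in>Q. x q + 1)"
proof -
  have inj: "inj_on (\<lambda>j. (i + j) mod n) (Jset m k)"
    by (rule inj_onI) (metis Jset_bound mk mod_inj_aux order.strict_trans)
  show "p \<notin> Q"
    unfolding p_def Q_def using mk Jset_bound mod_inj_aux
    by (smt (verit, ccfv_SIG) image_iff nat_neq_iff order.strict_trans)
  show "p < n" using mk unfolding p_def by simp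
  show "Q \<subseteq> {..<n}" using mk unfolding Q_def by auto
  show "card Q = card (Jset m k)" unfolding Q_def by (rule card_image[OF inj])
  have "(\<Prod>q\<in>Q. x q + 1) = (\<Prod>j\<in>Jset m k. x ((i + j) mod n) + 1)"
    unfolding Q_def by (subst prod.reindex[OF inj]) simp
  then show "theta n m k x i = x p * (\<Prod>q\<in>Q. x q + 1)"
    unfolding theta_def p_def Jset_def using i by simp
qed


lemma theta_anf:
  fixes n m k i :: nat
  defines "p \<equiv> (i + m * k) mod n"
  defines "Q \<equiv> (\<lambda>j. (i + j) mod n) ` Jset m k"
  assumes mk: "m * k < n" and i: "i < n"
  shows "anf n (\<lambda>x. theta n m k x i) = (\<lambda>S. if S \<in> insert p ` Pow Q then 1 else 0)"
proof (rule anf_eq)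
  note tf = theta_form[OF mk i, folded p_def Q_def]
  have finQ: "finite Q" unfolding Q_def using Jset_fin by simp
  have sub: "insert p ` Pow Q \<subseteq> Pow {..<n}" using tf by auto
  show "\<forall>S. \<not> S \<subseteq> {..<n} \<longrightarrow> (if S \<in> insert p ` Pow Q then 1 else 0) = (0::bit)"
    using sub by auto
  show "\<forall>x\<in>vecs n. theta n m k x i = (\<Sum>S\<in>Pow {..<n}. (if S \<in> insert p ` Pow Q then 1 else 0) * prod x S)"
  proof
    fix x :: "nat \<Rightarrow> bit"
    have inj: "inj_on (insert p) (Pow Q)"
      by (rule inj_onI) (metis Pow_iff insert_ident subsetD tf(1))
    have "(\<Sum>S\<in>Pow {..<n}. (if S \<in> insert p ` Pow Q then 1 else 0) * prod x S)
        = (\<Sum>S\<in>Pow {..<n}. if S \<in> insert p ` Pow Q then prod x S else 0)"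
      by (rule sum.cong) (auto simp del: mult_bit_eq_and)
    also have "\<dots> = (\<Sum>S\<in>Pow {..<n} \<inter> insert p ` Pow Q. prod x S)"
      by (rule sum.inter_restrict[symmetric]) simp
    also have "Pow {..<n} \<inter> insert p ` Pow Q = insert p ` Pow Q" using sub by blast
    also have "(\<Sum>S\<in>insert p ` Pow Q. prod x S) = (\<Sum>T\<in>Pow Q. prod x (insert p T))"
      by (rule sum.reindex[OF inj, unfolded comp_def])
    also have "\<dots> = (\<Sum>T\<in>Pow Q. x p * prod x T)"
    proof (rule sum.cong[OF refl])
      fix T assume "T \<in> Pow Q"
      then have "finite T" "p \<notin> T" using finQ finite_subset tf(1) by auto
      then show "prod x (insert p T) = x p * prod x T" by simp
    qed
    also have "\<dots> = x p * (\<Sum>T\<in>Pow Q. prod x T)"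
      by (simp add: sum_distrib_left del: mult_bit_eq_and add_bit_eq_xor)
    also have "(\<Sum>T\<in>Pow Q. prod x T) = (\<Prod>q\<in>Q. x q + 1)"
      using prod_add[OF finQ, of x "\<lambda>_. 1"] by (simp del: add_bit_eq_xor mult_bit_eq_and)
    finally show "theta n m k x i = (\<Sum>S\<in>Pow {..<n}. (if S \<in> insert p ` Pow Q then 1 else 0) * prod x S)"
      using tf(5) by simp
  qed
qed

lemma theta_anf_degree:
  fixes n m k i :: nat
  assumes mk: "m * k < n" and i: "i < n"
  shows "anf_degree n (\<lambda>x. theta n m k x i) = card (Jset m k) + 1"
proof -
  define p where "p = (i + m * k) mod n"
  define Q where "Q = (\<lambda>j. (i + j) mod n) ` Jset m k"
  note tf = theta_form[OF mk i, folded p_def Q_def]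
  have finQ: "finite Q" unfolding Q_def using Jset_fin by simp
  have sub: "insert p ` Pow Q \<subseteq> Pow {..<n}" using tf by auto
  have A: "{card S | S. S \<subseteq> {..<n} \<and> anf n (\<lambda>x. theta n m k x i) S \<noteq> 0} \<union> {0}
     = card ` (insert p ` Pow Q) \<union> {0}"
    unfolding theta_anf[OF mk i, folded p_def Q_def] using sub
    by (auto simp del: bit_not_zero_iff) blast+
  have "Max (card ` (insert p ` Pow Q) \<union> {0}) = card (insert p Q)"
  proof (rule Max_eqI)
    show "finite (card ` (insert p ` Pow Q) \<union> {0})" using finQ by simp
    show "card (insert p Q) \<in> card ` (insert p ` Pow Q) \<union> {0}" by blast
    fix y assume "y \<in> card ` (insert p ` Pow Q) \<union> {0}"
    then show "y \<le> card (insert p Q)"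
      using finQ by (auto intro!: card_mono)
  qed
  also have "card (insert p Q) = card (Jset m k) + 1" using tf finQ by simp
  finally show ?thesis unfolding anf_degree_def A .
qed

lemma card_Jset:
  assumes "k \<ge> 1" "m \<ge> 1"
  shows "card (Jset m k) = m * k - k"
proof -
  have M: "{j \<in> {1..m*k-1}. m dvd j} = (\<lambda>t. m * t) ` {1..k-1}"
  proof (rule set_eqI, rule iffI)
    fix j assume "j \<in> {j \<in> {1..m*k-1}. m dvd j}"
    then obtain t where t: "j = m * t" "1 \<le> j" "j \<le> m*k-1" by auto
    then have "t \<ge> 1" by (cases t) auto
    moreover have "t \<le> k - 1"
    proof (rule ccontr)
      assume "\<not> t \<le> k - 1"
      then have "t \<ge> k" by simp
      then have "m * t \<ge> m * k" by simp
      then show False using t assms by (metis One_nat_def diff_less le_trans less_numeral_extra(1) mult_pos_pos not_le nat_less_le order_less_le_trans zero_less_one_class.zero_le_one le_neq_implies_less less_le_trans)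
    qed
    ultimately show "j \<in> (\<lambda>t. m * t) ` {1..k-1}" using t by auto
  next
    fix j assume "j \<in> (\<lambda>t. m * t) ` {1..k-1}"
    then obtain t where t: "j = m * t" "t \<in> {1..k-1}" by (rule imageE)
    then have t: "j = m * t" "1 \<le> t" "t \<le> k - 1" by auto
    have "m * t \<le> m * (k - 1)" using t by simp
    also have "\<dots> = m * k - m" by (simp add: right_diff_distrib')
    finally have "j \<le> m * k - 1" using t assms by simp
    moreover have "1 \<le> j" using t assms by simp
    ultimately show "j \<in> {j \<in> {1..m*k-1}. m dvd j}" using t by auto
  qed
  have cM: "card {j \<in> {1..m*k-1}. m dvd j} = k - 1"
    unfolding M using assms by (subst card_image) (auto simp: inj_on_def)
  have "Jset m k = {1..m*k-1} - {j \<in> {1..m*k-1}. m dvd j}" unfolding Jset_def by auto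
  then have "card (Jset m k) = card {1..m*k-1} - card {j \<in> {1..m*k-1}. m dvd j}"
    by (metis (no_types, lifting) card_Diff_subset finite_atLeastAtMost finite_subset mem_Collect_eq subsetI)
  then have "card (Jset m k) = (m*k-1) - (k-1)"
    using cM by simp
  also have "\<dots> = m * k - k" using assms by (simp add: diff_diff_left)
  finally show ?thesis .
qed


lemma mL_lt:
  fixes n m :: nat
  assumes "m \<ge> 2" and "\<not> m dvd n" and "k \<le> n div m"
  shows "m * k < n"
proof -
  have "m * k \<le> m * (n div m)" using assms by simp
  also have "\<dots> \<le> n" by simp
  finally have "m * k \<le> n" .
  moreover have "m * k \<noteq> n" using assms(2) by auto
  ultimately show ?thesis by simp
qed

lemma theta_eval:
  fixes n m k k' :: nat
  assumes "m \<ge> 2" and "m * k < n" and "m * k' < n"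
  shows "theta n m k' (\<lambda>j. if j = m * k then 1 else 0) 0 = (if k' = k then 1 else 0)"
proof -
  define x :: "nat \<Rightarrow> bit" where "x = (\<lambda>j. if j = m * k then 1 else 0)"
  have n0: "0 < n" using assms by simp
  have tf: "theta n m k' x 0 = x ((0 + m * k') mod n) * (\<Prod>q\<in>(\<lambda>j. (0 + j) mod n) ` Jset m k'. x q + 1)"
    by (rule theta_form(5)[OF assms(3) n0])
  show ?thesis
  proof (cases "k' = k")
    case True
    have "(\<Prod>q\<in>(\<lambda>j. (0 + j) mod n) ` Jset m k'. x q + 1) = 1"
    proof (rule prod.neutral, rule ballI)
      fix q assume "q \<in> (\<lambda>j. (0 + j) mod n) ` Jset m k'"
      then obtain j where "j \<in> Jset m k'" "q = j mod n" by auto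
      then have "j < m * k" using Jset_bound True by blast
      then have "q = j" "j < m * k" using \<open>q = j mod n\<close> assms by auto
      then show "x q + 1 = 1" unfolding x_def by simp
    qed
    then show ?thesis using tf True assms unfolding x_def by simp
  next
    case False
    have "m * k' \<noteq> m * k" using False assms by simp
    then show ?thesis using tf False assms unfolding x_def by simp
  qed
qed

lemma indep:
  fixes n m :: nat and a :: "nat \<Rightarrow> bit"
  assumes "n \<ge> 1" and "m \<ge> 2" and "\<not> m dvd n"
    and z: "\<forall>x\<in>vecs n. \<forall>i<n. (\<Sum>k\<le>n div m. a k * theta n m k x i) = 0"
  shows "\<forall>k\<le>n div m. a k = 0"
proof (intro allI impI)
  fix k assume k: "k \<le> n div m"
  have mk: "m * k < n" using mL_lt[OF assms(2,3) k] .
  define x :: "nat \<Rightarrow> bit" where "x = (\<lambda>j. if j = m * k then 1 else 0)"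
  have xv: "x \<in> vecs n" unfolding vecs_def x_def using mk by auto
  have "(\<Sum>k'\<le>n div m. a k' * theta n m k' x 0) = (\<Sum>k'\<le>n div m. if k' = k then a k else 0)"
  proof (rule sum.cong[OF refl])
    fix k' assume "k' \<in> {..n div m}"
    then have "m * k' < n" using mL_lt[OF assms(2,3)] by simp
    then show "a k' * theta n m k' x 0 = (if k' = k then a k else 0)"
      unfolding x_def using theta_eval[OF assms(2) mk] by (simp del: mult_bit_eq_and)
  qed
  also have "\<dots> = a k" using k by simp
  finally show "a k = 0" using z xv assms(1) by auto
qed


lemma card_UNIV_bit2: "card (UNIV :: bit set) = 2"
proof -
  have "(UNIV :: bit set) = {0, 1}" by (auto intro: bit.exhaust)
  then show ?thesis using card_2_iff zero_neq_one by metis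
qed

theorem lemma2:
  fixes n m :: nat
  assumes "n \<ge> 1" and "m \<ge> 2" and "\<not> m dvd n"
  shows "(\<forall>k. 1 \<le> k \<and> k \<le> n div m \<longrightarrow> alg_degree n (theta n m k) = (m - 1) * k + 1)
    \<and> (\<forall>a :: nat \<Rightarrow> bit.
          (\<forall>x\<in>vecs n. \<forall>i<n. (\<Sum>k\<le>n div m. a k * theta n m k x i) = 0)
          \<longrightarrow> (\<forall>k\<le>n div m. a k = 0))
    \<and> card (Theta n m) = 2 ^ (n div m + 1)"
proof (intro conjI allI impI)
  fix k assume k: "1 \<le> k \<and> k \<le> n div m"
  have mk: "m * k < n" using mL_lt[OF assms(2,3)] k by simp
  have "(\<lambda>i. anf_degree n (\<lambda>x. theta n m k x i)) ` {..<n} = {card (Jset m k) + 1}"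
  proof (rule set_eqI, rule iffI)
    fix y assume "y \<in> (\<lambda>i. anf_degree n (\<lambda>x. theta n m k x i)) ` {..<n}"
    then show "y \<in> {card (Jset m k) + 1}" using theta_anf_degree[OF mk] by auto
  next
    fix y assume "y \<in> {card (Jset m k) + 1}"
    then have "y = anf_degree n (\<lambda>x. theta n m k x 0)" using theta_anf_degree[OF mk, of 0] assms(1) by simp
    then show "y \<in> (\<lambda>i. anf_degree n (\<lambda>x. theta n m k x i)) ` {..<n}" using assms(1) by auto
  qed
  then have "alg_degree n (theta n m k) = card (Jset m k) + 1"
    unfolding alg_degree_def by simp
  also have "\<dots> = (m - 1) * k + 1" using card_Jset[of k m] k assms(2)
    by (simp add: diff_mult_distrib)
  finally show "alg_degree n (theta n m k) = (m - 1) * k + 1" .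
next
  fix a :: "nat \<Rightarrow> bit" and k :: nat
  assume "\<forall>x\<in>vecs n. \<forall>i<n. (\<Sum>k\<le>n div m. a k * theta n m k x i) = 0" and "k \<le> n div m"
  then show "a k = 0" using indep[OF assms] by blast
next
  define L where "L = n div m"
  define F where "F = (\<lambda>a::nat \<Rightarrow> bit. (\<lambda>x i. \<Sum>k\<le>L. a k * theta n m k x i))"
  define PP where "PP = PiE {..L} (\<lambda>_. UNIV :: bit set)"
  have T: "Theta n m = range F" unfolding Theta_def F_def L_def by auto
  have R: "range F = F ` PP"
  proof
    show "F ` PP \<subseteq> range F" by auto
    show "range F \<subseteq> F ` PP"
    proof
      fix y assume "y \<in> range F"
      then obtain a where y: "y = F a" by auto
      have "restrict a {..L} \<in> PP" unfolding PP_def by auto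
      moreover have "F (restrict a {..L}) = F a" unfolding F_def
        by (intro ext sum.cong) auto
      ultimately show "y \<in> F ` PP" using y by (metis image_eqI)
    qed
  qed
  have inj: "inj_on F PP"
  proof (rule inj_onI)
    fix a b assume a: "a \<in> PP" and b: "b \<in> PP" and e: "F a = F b"
    have "\<forall>x\<in>vecs n. \<forall>i<n. (\<Sum>k\<le>n div m. (a k + b k) * theta n m k x i) = 0"
    proof (intro ballI allI impI)
      fix x i
      have "(\<Sum>k\<le>n div m. (a k + b k) * theta n m k x i) = F a x i + F b x i"
        unfolding F_def L_def by (simp add: distrib_right sum.distrib del: add_bit_eq_xor mult_bit_eq_and)
      also have "\<dots> = 0" using e bit_self_add by simp
      finally show "(\<Sum>k\<le>n div m. (a k + b k) * theta n m k x i) = 0" .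
    qed
    then have "\<forall>k\<le>L. a k + b k = 0" using indep[OF assms, of "\<lambda>k. a k + b k"] unfolding L_def by blast
    then have "\<forall>k\<le>L. a k = b k"
      by (metis add_diff_cancel_left' diff_zero minus_bit_def)
    then show "a = b" using a b unfolding PP_def
      by (metis PiE_ext atMost_iff)
  qed
  have "card (Theta n m) = card PP" unfolding T R by (rule card_image[OF inj])
  also have "card PP = 2 ^ (L + 1)" unfolding PP_def
    by (simp add: card_PiE card_UNIV_bit2)
  finally show "card (Theta n m) = 2 ^ (n div m + 1)" unfolding L_def .
qed

end
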